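(* Let $a\neq0$, $b\in\mathbb{R}$, $c\neq0$, $A_1=(a,b,c)$, $A_2=(-ae^{c},-be^{-c},-c)$, $0<\alpha<\pi$, and put $S=\sqrt{(a^2+1)e^{2c}-2e^{c}+1}$. Let $\epsilon=-1$ if $a>0$ and $\epsilon=+1$ if $a<0$. If $$\cos\alpha>\frac{e^{c}}{S}\cdot\frac{2-4e^{c}+\epsilon aS+e^{2c}\big(2a^2+2+\epsilon aS\big)}{\sqrt{(a^2+1)e^{6c}+e^{2c}\big(a^2+3+4\epsilon aS\big)+e^{4c}\big(6a^2+3+4\epsilon aS\big)-2e^{c}-4e^{3c}-2e^{5c}+1}},$$ then the translation-like $\alpha$-isoptic surface of $\overline{A_1A_2}$ is infinite: it contains points with arbitrarily large $z$-coordinate.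
   Context: $\mathbf{Sol}$ is $\mathbb{R}^3$ with coordinates $(x,y,z)$, group law $(a,b,c)(x,y,z)=(x+ae^{-z},\,y+be^{z},\,z+c)$, and left-invariant metric $ds^2=e^{2z}dx^2+e^{-2z}dy^2+dz^2$. The translation curve starting at the origin with initial unit vector $(u,v,w)$ is $t\mapsto\big(-\tfrac{u}{w}(e^{-wt}-1),\tfrac{v}{w}(e^{wt}-1),wt\big)$ if $w\neq0$ and $t\mapsto(ut,vt,0)$ if $w=0$. For $P=(p_1,p_2,p_3)$ let $T_P(X,Y,Z)=(p_1+Xe^{-p_3},\,p_2+Ye^{p_3},\,p_3+Z)$; the translation curve from $P$ to $Q$ is the $T_P$-image of the translation curve from the origin to $T_P^{-1}(Q)$. The translation-like $\alpha$-isoptic surface of the translation-like segment $\overline{A_1A_2}$ is the set of points $P\notin\{A_1,A_2\}$ such that the angle at $P$, measured with the metric at $P$, between the initial tangent vectors of the translation curves from $P$ to $A_1$ and from $P$ to $A_2$ equals $\alpha$. Equivalently, $P=(x,y,z)$ lies on it iff $\cos\alpha=\dfrac{e^{z}(x+ae^{c})(x-a)+e^{-z}(y+be^{-c})(y-b)+4\sinh\frac{z+c}{2}\sinh\frac{z-c}{2}}{\sqrt{e^{z+c}(x-a)^2+e^{-(z+c)}(y-b)^2+4\sinh^2\frac{z-c}{2}}\sqrt{e^{z-c}(x+ae^{c})^2+e^{-(z-c)}(y+be^{-c})^2+4\sinh^2\frac{z+c}{2}}}$. *)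

theory Defs
  imports "HOL-Analysis.Analysis"
begin

type_synonym pt = "real \<times> real \<times> real"

definition zc :: "pt \<Rightarrow> real" where
  "zc P = snd (snd P)"

text \<open>Translation curve starting at the origin with initial vector d = (u,v,w).\<close>
definition sol_tc :: "pt \<Rightarrow> real \<Rightarrow> pt" where
  "sol_tc d t = (case d of (u, v, w) \<Rightarrow>
     if w \<noteq> 0 then (-(u / w) * (exp (-(w * t)) - 1), (v / w) * (exp (w * t) - 1), w * t)
     else (u * t, v * t, 0))"

definition unit_vec :: "pt \<Rightarrow> bool" where
  "unit_vec d = (case d of (u, v, w) \<Rightarrow> u\<^sup>2 + v\<^sup>2 + w\<^sup>2 = 1)"

definition sol_T :: "pt \<Rightarrow> pt \<Rightarrow> pt" where
  "sol_T P X = (case P of (p1, p2, p3) \<Rightarrow> case X of (x, y, z) \<Rightarrow>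
     (p1 + x * exp (-p3), p2 + y * exp p3, p3 + z))"

definition sol_T_inv :: "pt \<Rightarrow> pt \<Rightarrow> pt" where
  "sol_T_inv P Q = (case P of (p1, p2, p3) \<Rightarrow> case Q of (q1, q2, q3) \<Rightarrow>
     ((q1 - p1) * exp p3, (q2 - p2) * exp (-p3), q3 - p3))"

definition tc_init_tangent :: "pt \<Rightarrow> pt \<Rightarrow> pt \<Rightarrow> bool" where
  "tc_init_tangent P Q v = (\<exists>d t. unit_vec d \<and> 0 < t \<and> sol_tc d t = sol_T_inv P Q \<and>
      ((\<lambda>s. sol_T P (sol_tc d s)) has_vector_derivative v) (at 0))"

definition sol_inner :: "pt \<Rightarrow> pt \<Rightarrow> pt \<Rightarrow> real" where
  "sol_inner P v w = (case P of (p1, p2, p3) \<Rightarrow> case v of (v1, v2, v3) \<Rightarrow> case w of (w1, w2, w3) \<Rightarrow>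
     exp (2 * p3) * v1 * w1 + exp (-(2 * p3)) * v2 * w2 + v3 * w3)"

definition sol_angle :: "pt \<Rightarrow> pt \<Rightarrow> pt \<Rightarrow> real" where
  "sol_angle P v w = arccos (sol_inner P v w / (sqrt (sol_inner P v v) * sqrt (sol_inner P w w)))"

definition isoptic :: "pt \<Rightarrow> pt \<Rightarrow> real \<Rightarrow> pt set" where
  "isoptic A1 A2 \<alpha> = {P. P \<noteq> A1 \<and> P \<noteq> A2 \<and>
     (\<exists>v1 v2. tc_init_tangent P A1 v1 \<and> tc_init_tangent P A2 v2 \<and> sol_angle P v1 v2 = \<alpha>)}"

end

theory Submission
  imports Defs "HOL-Analysis.Analysis"
begin

lemma unit_vec_norm: "unit_vec d \<longleftrightarrow> norm d = 1"
  by (cases d) (auto simp: unit_vec_def norm_Pair)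

lemma tangent:
  fixes P Q :: pt and X Y Z :: real
  assumes inv: "sol_T_inv P Q = (X, Y, Z)" and Z: "Z \<noteq> 0"
  defines "s \<equiv> (- X / (exp (- Z) - 1), Y / (exp Z - 1), 1::real)"
  shows "tc_init_tangent P Q
     (fst s * (Z / norm (Z *\<^sub>R s)) * exp (- zc P), fst (snd s) * (Z / norm (Z *\<^sub>R s)) * exp (zc P), Z / norm (Z *\<^sub>R s))"
proof -
  obtain p1 p2 p3 where P: "P = (p1,p2,p3)" by (cases P) auto
  define n where "n = norm (Z *\<^sub>R s)"
  have sn: "norm s \<noteq> 0" unfolding s_def by (simp add: zero_prod_def)
  have n0: "n > 0" using Z sn unfolding n_def by simp
  define d where "d = (1 / n) *\<^sub>R (Z *\<^sub>R s)"
  obtain u v w where d: "d = (u,v,w)" by (cases d) auto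
  have u: "u = fst s * (Z/n)" and v: "v = fst (snd s) * (Z/n)" and w: "w = Z/n"
    using d unfolding d_def s_def by auto
  have w0: "w \<noteq> 0" using w Z n0 by simp
  have e1: "exp (- Z) - 1 \<noteq> 0" using Z by simp
  have e2: "exp Z - 1 \<noteq> 0" using Z by simp
  have unit: "unit_vec d" unfolding unit_vec_norm d_def using n0 Z sn by (simp add: n_def)
  have wn: "w * n = Z" using w n0 by simp
  have tc: "sol_tc d n = (X, Y, Z)"
    using w0 e1 e2 wn n0 Z unfolding d sol_tc_def u v w s_def by (simp add: field_simps)
  have eq: "(\<lambda>s. sol_T P (sol_tc d s)) = (\<lambda>s. (p1 + (-(u / w) * (exp (-(w * s)) - 1)) * exp (-p3),
     p2 + ((v / w) * (exp (w * s) - 1)) * exp p3, p3 + w * s))"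
    using w0 unfolding d sol_tc_def sol_T_def P by auto
  have der: "((\<lambda>s. sol_T P (sol_tc d s)) has_vector_derivative (u * exp (-p3), v * exp p3, w)) (at 0)"
  proof -
    have d1: "((\<lambda>s. p1 + (-(u / w) * (exp (-(w * s)) - 1)) * exp (-p3)) has_field_derivative u * exp (-p3)) (at 0)"
      by (rule derivative_eq_intros refl | simp)+ (use w0 in \<open>simp add: field_simps\<close>)
    have d2: "((\<lambda>s. p2 + ((v / w) * (exp (w * s) - 1)) * exp p3) has_field_derivative v * exp p3) (at 0)"
      by (rule derivative_eq_intros refl | simp)+ (use w0 in \<open>simp add: field_simps\<close>)
    have d3: "((\<lambda>s. p3 + w * s) has_field_derivative w) (at 0)"
      by (rule derivative_eq_intros refl | simp)+
    show ?thesis unfolding eq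
      using d1 d2 d3 by (intro has_vector_derivative_Pair) (auto simp: has_real_derivative_iff_has_vector_derivative)
  qed
  have vec: "(fst s * (Z/n) * exp (- zc P), fst (snd s) * (Z/n) * exp (zc P), Z/n) = (u * exp (-p3), v * exp p3, w)"
    using u v w unfolding P zc_def by simp
  show ?thesis unfolding tc_init_tangent_def n_def[symmetric] vec
    apply (rule exI[of _ d], rule exI[of _ n]) using unit n0 tc der inv by simp
qed

definition sv :: "pt \<Rightarrow> pt \<Rightarrow> pt" where
  "sv P Q = (case sol_T_inv P Q of (X, Y, Z) \<Rightarrow> (- X / (exp (- Z) - 1), Y / (exp Z - 1), 1))"

definition cosf :: "pt \<Rightarrow> pt \<Rightarrow> real" where
  "cosf u v = inner u v / (norm u * norm v)"

lemma sol_inner_eq: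
  "sol_inner P (f1 * c1 * exp (- zc P), g1 * c1 * exp (zc P), c1) (f2 * c2 * exp (- zc P), g2 * c2 * exp (zc P), c2)
   = c1 * c2 * inner (f1, g1, 1::real) (f2, g2, 1::real)"
proof -
  obtain p1 p2 p3 where P: "P = (p1,p2,p3)" by (cases P) auto
  have e1: "exp (2*p3) * exp (-p3) * exp (-p3) = 1" by (simp flip: exp_add)
  have e2: "exp (-(2*p3)) * exp (p3) * exp (p3) = 1" by (simp flip: exp_add)
  have "sol_inner P (f1 * c1 * exp (- zc P), g1 * c1 * exp (zc P), c1) (f2 * c2 * exp (- zc P), g2 * c2 * exp (zc P), c2)
     = (exp (2*p3) * exp (-p3) * exp (-p3)) * f1*c1*f2*c2 + (exp (-(2*p3)) * exp (p3) * exp (p3)) * g1*c1*g2*c2 + c1*c2"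
    unfolding P sol_inner_def zc_def by (simp add: algebra_simps)
  also have "\<dots> = c1 * c2 * inner (f1, g1, 1::real) (f2, g2, 1::real)"
    unfolding e1 e2 by (simp add: algebra_simps)
  finally show ?thesis .
qed

lemma norm3: "norm (x, y, z::real) = sqrt (x^2 + y^2 + z^2)"
  by (simp add: norm_Pair)

lemma member:
  fixes P A1 A2 :: pt and \<alpha> :: real
  assumes "P \<noteq> A1" "P \<noteq> A2" "zc (sol_T_inv P A1) < 0" "zc (sol_T_inv P A2) < 0"
    and "0 \<le> \<alpha>" "\<alpha> \<le> pi" and "cosf (sv P A1) (sv P A2) = cos \<alpha>"
  shows "P \<in> isoptic A1 A2 \<alpha>"
proof -
  obtain X1 Y1 Z1 where i1: "sol_T_inv P A1 = (X1, Y1, Z1)" by (cases "sol_T_inv P A1") auto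
  obtain X2 Y2 Z2 where i2: "sol_T_inv P A2 = (X2, Y2, Z2)" by (cases "sol_T_inv P A2") auto
  have Z1: "Z1 < 0" and Z2: "Z2 < 0" using assms(3,4) i1 i2 by (auto simp: zc_def)
  define f1 where "f1 = - X1 / (exp (- Z1) - 1)"
  define g1 where "g1 = Y1 / (exp Z1 - 1)"
  define f2 where "f2 = - X2 / (exp (- Z2) - 1)"
  define g2 where "g2 = Y2 / (exp Z2 - 1)"
  have s1: "sv P A1 = (f1, g1, 1)" unfolding sv_def i1 f1_def g1_def by simp
  have s2: "sv P A2 = (f2, g2, 1)" unfolding sv_def i2 f2_def g2_def by simp
  define n1 where "n1 = norm (f1, g1, 1::real)"
  define n2 where "n2 = norm (f2, g2, 1::real)"
  have n1: "n1 > 0" unfolding n1_def by (simp add: zero_prod_def)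
  have n2: "n2 > 0" unfolding n2_def by (simp add: zero_prod_def)
  define c1 where "c1 = Z1 / norm (Z1 *\<^sub>R (f1, g1, 1::real))"
  define c2 where "c2 = Z2 / norm (Z2 *\<^sub>R (f2, g2, 1::real))"
  have c1: "c1 = - 1 / n1" using Z1 n1 unfolding c1_def n1_def norm_scaleR by (simp add: field_simps)
  have c2: "c2 = - 1 / n2" using Z2 n2 unfolding c2_def n2_def norm_scaleR by (simp add: field_simps)
  have t1: "tc_init_tangent P A1 (f1 * c1 * exp (- zc P), g1 * c1 * exp (zc P), c1)"
    using tangent[OF i1] Z1 unfolding c1_def f1_def g1_def by simp
  have t2: "tc_init_tangent P A2 (f2 * c2 * exp (- zc P), g2 * c2 * exp (zc P), c2)"
    using tangent[OF i2] Z2 unfolding c2_def f2_def g2_def by simp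
  have ii: "inner (f, g, 1::real) (f, g, 1::real) = (norm (f, g, 1::real))^2" for f g
    by (simp add: power2_norm_eq_inner)
  have "sol_angle P (f1 * c1 * exp (- zc P), g1 * c1 * exp (zc P), c1) (f2 * c2 * exp (- zc P), g2 * c2 * exp (zc P), c2)
      = arccos (cosf (sv P A1) (sv P A2))"
    unfolding sol_angle_def sol_inner_eq s1 s2 cosf_def ii n1_def[symmetric] n2_def[symmetric] c1 c2
    using n1 n2 by (simp add: field_simps power2_eq_square)
  also have "\<dots> = \<alpha>" using assms(5-7) by (simp add: arccos_cos)
  finally show ?thesis unfolding isoptic_def using assms(1,2) t1 t2 by blast
qed

lemma expn: "exp (real n * c) = exp c ^ n" by (simp add: exp_of_nat_mult)

lemma minval:
  fixes a c S \<epsilon> k x0 :: real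
  assumes a: "a \<noteq> 0" and c: "c \<noteq> 0"
    and Sdef: "S = sqrt ((a\<^sup>2 + 1) * exp (2 * c) - 2 * exp c + 1)"
    and e: "\<epsilon> = (if a > 0 then -1 else 1)"
    and k: "k = exp c" and x0: "x0 = (a * k + \<epsilon> * S) / (k - 1)"
  shows "cosf (k * (x0 - a), 0, 1) ((x0 + a * k) / k, 0, 1) = exp c / S *
      ((2 - 4 * exp c + \<epsilon> * a * S + exp (2 * c) * (2 * a\<^sup>2 + 2 + \<epsilon> * a * S)) /
       sqrt ((a\<^sup>2 + 1) * exp (6 * c) + exp (2 * c) * (a\<^sup>2 + 3 + 4 * \<epsilon> * a * S)
             + exp (4 * c) * (6 * a\<^sup>2 + 3 + 4 * \<epsilon> * a * S)
             - 2 * exp c - 4 * exp (3 * c) - 2 * exp (5 * c) + 1))"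
proof -
  have k0: "k > 0" using k by simp
  have k1: "k \<noteq> 1" using k c by simp
  have D: "k - 1 \<noteq> 0" using k1 by simp
  have e2: "exp (2*c) = k^2" using expn[of 2 c] k by simp
  have e3: "exp (3*c) = k^3" using expn[of 3 c] k by simp
  have e4: "exp (4*c) = k^4" using expn[of 4 c] k by simp
  have e5: "exp (5*c) = k^5" using expn[of 5 c] k by simp
  have e6: "exp (6*c) = k^6" using expn[of 6 c] k by simp
  define Q where "Q = (a\<^sup>2 + 1) * k^2 - 2 * k + 1"
  have Q: "Q = (a*k)^2 + (k-1)^2" unfolding Q_def by (simp add: algebra_simps power2_eq_square)
  have Qpos: "Q > 0" unfolding Q using a k0 by (simp add: add_pos_nonneg)
  have SQ: "S = sqrt Q" unfolding Sdef Q_def e2 k ..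
  have S0: "S > 0" using SQ Qpos by simp
  have S2: "S^2 = Q" using SQ Qpos by simp
  have ee: "\<epsilon>^2 = 1" using e by simp
  define T where "T = \<epsilon> * S"
  have T2: "T^2 = Q" unfolding T_def using ee S2 by (simp add: power_mult_distrib)
  define A where "A = x0 - a"
  define B where "B = x0 + a * k"
  have A: "A = (a + T) / (k - 1)" unfolding A_def x0 T_def using D by (simp add: field_simps)
  have B: "B = (a * k^2 + T) / (k - 1)" unfolding B_def x0 T_def using D by (simp add: field_simps power2_eq_square)
  have neq: "k^2 * A^2 + 1 = B^2 + k^2"
  proof -
    have "(k^2 * A^2 + 1) * (k-1)^2 = k^2 * (a+T)^2 + (k-1)^2" unfolding A using D by (simp add: field_simps)
    also have "\<dots> = (a*k^2+T)^2 + k^2*(k-1)^2" using T2 unfolding Q_def by algebra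
    also have "\<dots> = (B^2 + k^2) * (k-1)^2" unfolding B using D by (simp add: field_simps)
    finally show ?thesis using D by simp
  qed
  define N where "N = B^2 + k^2"
  have N0: "N > 0" unfolding N_def using k0 by (simp add: add_nonneg_pos)
  have nL1: "norm (k * A, 0::real, 1::real) = sqrt N" unfolding norm3 using neq unfolding N_def
    by (simp add: power_mult_distrib)
  have nL2: "norm (B / k, 0::real, 1::real) = sqrt N / k"
  proof -
    have "(B/k)^2 + 0^2 + 1^2 = N / k^2" unfolding N_def using k0 by (simp add: field_simps)
    thus ?thesis unfolding norm3 using k0 by (simp add: real_sqrt_divide)
  qed
  have cf: "cosf (k * (x0 - a), 0, 1) ((x0 + a * k) / k, 0, 1) = k * (A*B + 1) / N"
    unfolding cosf_def A_def[symmetric] B_def[symmetric] nL1 nL2 using k0 N0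
    by (simp add: field_simps)
  define G where "G = (a*k^2+T)^2 + k^2*(k-1)^2"
  have G0: "G > 0" unfolding G_def using k0 D by (simp add: add_nonneg_pos)
  have NG: "N = G / (k-1)^2" unfolding N_def G_def B using D by (simp add: field_simps)
  define num where "num = 2 - 4 * k + T * a + k^2 * (2 * a\<^sup>2 + 2 + T * a)"
  have AB: "A*B + 1 = num / (k-1)^2"
  proof -
    have ab: "A*B = ((a+T)*(a*k^2+T)) / (k-1)^2" unfolding A B by (simp add: power2_eq_square)
    have "(A*B+1) * (k-1)^2 = (a+T)*(a*k^2+T) + (k-1)^2" proof -
      have d2: "(k-1)^2 \<noteq> 0" using D by simp
      show ?thesis unfolding ab distrib_right using d2 by simp
    qed
    also have "\<dots> = num" unfolding num_def using T2 unfolding Q_def by algebra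
    finally show ?thesis using D by (simp add: field_simps)
  qed
  define big where "big = (a\<^sup>2 + 1) * k^6 + k^2 * (a\<^sup>2 + 3 + 4 * T * a)
             + k^4 * (6 * a\<^sup>2 + 3 + 4 * T * a) - 2 * k - 4 * k^3 - 2 * k^5 + 1"
  have GQ: "G = Q * (1 + k^2) + 2*a*k^2*T" unfolding G_def using T2 unfolding Q_def by algebra
  have big2: "big * Q = G^2"
  proof -
    have "G^2 = Q^2*(1+k^2)^2 + 4*a*Q*k^2*(1+k^2)*T + 4*a^2*k^4*T^2" unfolding GQ
      by algebra
    also have "\<dots> = Q * (Q*(1+k^2)^2 + 4*a^2*k^4 + 4*a*k^2*(1+k^2)*T)" unfolding T2 by algebra
    also have "\<dots> = Q * big" unfolding big_def Q_def by algebra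
    finally show ?thesis by simp
  qed
  have sb: "sqrt big = G / S"
  proof -
    have "big = (G/S)^2" using big2 S2 Qpos by (simp add: power_divide field_simps)
    thus ?thesis using G0 S0 by simp
  qed
  have rhs: "exp c / S * ((2 - 4 * exp c + \<epsilon> * a * S + exp (2 * c) * (2 * a\<^sup>2 + 2 + \<epsilon> * a * S)) /
       sqrt ((a\<^sup>2 + 1) * exp (6 * c) + exp (2 * c) * (a\<^sup>2 + 3 + 4 * \<epsilon> * a * S)
             + exp (4 * c) * (6 * a\<^sup>2 + 3 + 4 * \<epsilon> * a * S)
             - 2 * exp c - 4 * exp (3 * c) - 2 * exp (5 * c) + 1)) = k * num / G"
  proof -
    have 1: "(2 - 4 * exp c + \<epsilon> * a * S + exp (2 * c) * (2 * a\<^sup>2 + 2 + \<epsilon> * a * S)) = num"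
      unfolding num_def e2 T_def k by (simp add: algebra_simps)
    have 2: "(a\<^sup>2 + 1) * exp (6 * c) + exp (2 * c) * (a\<^sup>2 + 3 + 4 * \<epsilon> * a * S)
             + exp (4 * c) * (6 * a\<^sup>2 + 3 + 4 * \<epsilon> * a * S)
             - 2 * exp c - 4 * exp (3 * c) - 2 * exp (5 * c) + 1 = big"
      unfolding big_def e2 e3 e4 e5 e6 T_def k by (simp add: algebra_simps)
    show ?thesis unfolding 1 2 sb using S0 G0 k by (simp add: field_simps)
  qed
  show ?thesis unfolding rhs cf AB NG using D G0 by (simp add: field_simps)
qed

lemma sv_eq: "sv (x,y,z) (q1,q2,q3) = (-((q1-x)*exp z)/(exp(-(q3-z))-1), ((q2-y)*exp(-z))/(exp(q3-z)-1), 1)"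
  by (simp add: sv_def sol_T_inv_def)

lemma einv: "((\<lambda>z::real. inverse (exp z)) \<longlongrightarrow> 0) at_top"
  by (rule tendsto_inverse_0_at_top[OF exp_at_top])

lemma lim1: fixes p q :: real shows "((\<lambda>z. - (p * exp z) / (exp (-(q - z)) - 1)) \<longlongrightarrow> - p * exp q) at_top"
proof -
  have ev: "eventually (\<lambda>z. - p / (exp (-q) - inverse (exp z)) = - (p * exp z) / (exp (-(q - z)) - 1)) at_top"
  proof (rule eventually_mono[OF eventually_gt_at_top[of q]])
    fix z assume "q < z"
    hence ne: "exp (-q) * exp z \<noteq> 1" by (simp flip: exp_add)
    have "exp (-(q - z)) = exp (-q) * exp z" by (simp flip: exp_add)
    thus "- p / (exp (-q) - inverse (exp z)) = - (p * exp z) / (exp (-(q - z)) - 1)"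
      using ne by (simp add: field_simps)
  qed
  have "((\<lambda>z. - p / (exp (-q) - inverse (exp z))) \<longlongrightarrow> - p / (exp (-q) - 0)) at_top"
    by (intro tendsto_intros einv) simp
  hence "((\<lambda>z. - p / (exp (-q) - inverse (exp z))) \<longlongrightarrow> - p * exp q) at_top"
    by (simp add: exp_minus divide_inverse)
  thus ?thesis using tendsto_cong[OF ev] by simp
qed

lemma lim2: fixes p q :: real shows "((\<lambda>z. (p * exp (- z)) / (exp (q - z) - 1)) \<longlongrightarrow> 0) at_top"
proof -
  have eq: "(\<lambda>z. (p * exp (- z)) / (exp (q - z) - 1)) = (\<lambda>z. (p * inverse (exp z)) / (exp q * inverse (exp z) - 1))"
    by (rule ext) (simp add: exp_minus exp_diff divide_inverse)
  have "((\<lambda>z. (p * inverse (exp z)) / (exp q * inverse (exp z) - 1)) \<longlongrightarrow> (p * 0) / (exp q * 0 - 1)) at_top"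
    by (intro tendsto_intros einv) simp
  thus ?thesis unfolding eq by simp
qed

lemma norm1: "norm (p, q, 1::real) \<noteq> 0" by (simp add: zero_prod_def)
lemma nz1: "(p, q, 1::real) \<noteq> 0" by (simp add: zero_prod_def)

lemma limcos:
  fixes a b c x0 :: real
  defines "k \<equiv> exp c"
  shows "((\<lambda>z. cosf (sv (x0,b,z) (a,b,c)) (sv (x0,b,z) (- a * exp c, - b * exp (- c), - c)))
      \<longlongrightarrow> cosf (k * (x0 - a), 0, 1) ((x0 + a * k) / k, 0, 1)) at_top"
proof -
  have l1: "((\<lambda>z. sv (x0,b,z) (a,b,c)) \<longlongrightarrow> (k * (x0 - a), 0, 1)) at_top"
    unfolding sv_eq
    using lim1[of "a - x0" c] by (auto intro!: tendsto_Pair simp: k_def algebra_simps)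
  have l2: "((\<lambda>z. sv (x0,b,z) (- a * exp c, - b * exp (- c), - c)) \<longlongrightarrow> ((x0 + a * k) / k, 0, 1)) at_top"
    unfolding sv_eq
    using lim1[of "- a * exp c - x0" "-c"] lim2[of "- b * exp (- c) - b" "-c"]
    by (auto intro!: tendsto_Pair simp: k_def exp_minus field_simps)
  show ?thesis unfolding cosf_def
    by (intro tendsto_intros l1 l2) (simp add: nz1)
qed

lemma cosf_self: "v \<noteq> 0 \<Longrightarrow> cosf v v = 1"
  unfolding cosf_def by (simp flip: power2_norm_eq_inner add: power2_eq_square)

lemma contc: "continuous_on {0..1::real} (\<lambda>t. cosf (p t, q t, 1) (r t, s t, 1))"
  if "continuous_on {0..1} p" "continuous_on {0..1} q" "continuous_on {0..1} r" "continuous_on {0..1} s"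
  unfolding cosf_def
  apply (intro continuous_intros that)
  apply (simp add: nz1)
  done

theorem lemma4p3:
  fixes a b c \<alpha> S \<epsilon> :: real
  assumes "a \<noteq> 0" and "c \<noteq> 0" and "0 < \<alpha>" and "\<alpha> < pi"
    and "S = sqrt ((a\<^sup>2 + 1) * exp (2 * c) - 2 * exp c + 1)"
    and "\<epsilon> = (if a > 0 then -1 else 1)"
    and "cos \<alpha> > exp c / S *
      ((2 - 4 * exp c + \<epsilon> * a * S + exp (2 * c) * (2 * a\<^sup>2 + 2 + \<epsilon> * a * S)) /
       sqrt ((a\<^sup>2 + 1) * exp (6 * c) + exp (2 * c) * (a\<^sup>2 + 3 + 4 * \<epsilon> * a * S)
             + exp (4 * c) * (6 * a\<^sup>2 + 3 + 4 * \<epsilon> * a * S)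
             - 2 * exp c - 4 * exp (3 * c) - 2 * exp (5 * c) + 1))"
  shows "\<forall>M. \<exists>P \<in> isoptic (a, b, c) (- a * exp c, - b * exp (- c), - c) \<alpha>. zc P > M"
proof
  fix M :: real
  define k where "k = exp c"
  define x0 where "x0 = (a * k + \<epsilon> * S) / (k - 1)"
  have E: "cosf (k * (x0 - a), 0, 1) ((x0 + a * k) / k, 0, 1) < cos \<alpha>"
    using minval[OF assms(1,2,5,6) k_def x0_def] assms(7) by simp
  have L: "((\<lambda>z. cosf (sv (x0,b,z) (a,b,c)) (sv (x0,b,z) (- a * exp c, - b * exp (- c), - c)))
      \<longlongrightarrow> cosf (k * (x0 - a), 0, 1) ((x0 + a * k) / k, 0, 1)) at_top"
    unfolding k_def by (rule limcos)
  have "eventually (\<lambda>z. cosf (sv (x0,b,z) (a,b,c)) (sv (x0,b,z) (- a * exp c, - b * exp (- c), - c)) < cos \<alpha>) at_top"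
    by (rule order_tendstoD(2)[OF L E])
  then obtain Z0 where Z0: "\<And>z. z \<ge> Z0 \<Longrightarrow> cosf (sv (x0,b,z) (a,b,c)) (sv (x0,b,z) (- a * exp c, - b * exp (- c), - c)) < cos \<alpha>"
    by (auto simp: eventually_at_top_linorder)
  define z where "z = max Z0 (max M \<bar>c\<bar>) + 1"
  have zM: "z > M" and zc1: "z > c" and zc2: "z > - c" and zZ: "z \<ge> Z0" unfolding z_def by auto
  have g0: "cosf (sv (x0,b,z) (a,b,c)) (sv (x0,b,z) (- a * exp c, - b * exp (- c), - c)) < cos \<alpha>"
    using Z0[OF zZ] .
  define d1 where "d1 = exp (-(c - z)) - 1"
  define d2 where "d2 = exp (-(- c - z)) - 1"
  define e1 where "e1 = exp (c - z) - 1"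
  define e2 where "e2 = exp (- c - z) - 1"
  have d1: "d1 > 0" unfolding d1_def using zc1 by simp
  have d2: "d2 > 0" unfolding d2_def using zc2 by simp
  have e1: "e1 < 0" unfolding e1_def using zc1 by simp
  have e2: "e2 < 0" unfolding e2_def using zc2 by simp
  have dd: "d2 - d1 \<noteq> 0" unfolding d1_def d2_def using assms(2) by simp
  have ee: "e1 - e2 \<noteq> 0" unfolding e1_def e2_def using assms(2) by simp
  define x1 where "x1 = (a * d2 + a * k * d1) / (d2 - d1)"
  define y1 where "y1 = (- b * exp (- c) * e1 - b * e2) / (e1 - e2)"
  have sv1: "sv (x, y, z) (a,b,c) = (-((a - x) * exp z) / d1, ((b - y) * exp (- z)) / e1, 1)" for x y
    unfolding sv_eq d1_def e1_def by simp
  have sv2: "sv (x, y, z) (- a * exp c, - b * exp (- c), - c) =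
     (-((- a * exp c - x) * exp z) / d2, ((- b * exp (- c) - y) * exp (- z)) / e2, 1)" for x y
    unfolding sv_eq d2_def e2_def by simp
  have x1eq: "x1 * (d2 - d1) = a * d2 + a * k * d1" unfolding x1_def using dd by simp
  have y1eq: "y1 * (e1 - e2) = - b * exp (- c) * e1 - b * e2" unfolding y1_def using ee by simp
  have c1: "-((a - x1) * exp z) / d1 = -((- a * exp c - x1) * exp z) / d2"
  proof -
    have "(x1 - a) * d2 = (x1 + a * k) * d1" using x1eq by (simp add: algebra_simps)
    hence "((x1 - a) * d2) * exp z = ((x1 + a * k) * d1) * exp z" by simp
    thus ?thesis using d1 d2 unfolding k_def by (simp add: field_simps)
  qed
  have c2: "((b - y1) * exp (- z)) / e1 = ((- b * exp (- c) - y1) * exp (- z)) / e2"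
  proof -
    have "(b - y1) * e2 = (- b * exp (- c) - y1) * e1" using y1eq by (simp add: algebra_simps)
    hence "((b - y1) * e2) * exp (- z) = ((- b * exp (- c) - y1) * e1) * exp (- z)" by simp
    thus ?thesis using e1 e2 by (simp add: field_simps)
  qed
  have same: "sv (x1,y1,z) (a,b,c) = sv (x1,y1,z) (- a * exp c, - b * exp (- c), - c)"
    unfolding sv1 sv2 c1 c2 ..
  have g1: "cosf (sv (x1,y1,z) (a,b,c)) (sv (x1,y1,z) (- a * exp c, - b * exp (- c), - c)) = 1"
    unfolding same sv2 by (rule cosf_self[OF nz1])
  define g where "g = (\<lambda>t. cosf (sv (x0 + t * (x1 - x0), b + t * (y1 - b), z) (a,b,c))
                         (sv (x0 + t * (x1 - x0), b + t * (y1 - b), z) (- a * exp c, - b * exp (- c), - c)))"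
  have cont: "continuous_on {0..1} g"
  proof -
    have "d1 \<noteq> 0" "d2 \<noteq> 0" "e1 \<noteq> 0" "e2 \<noteq> 0" using d1 d2 e1 e2 by auto
    thus ?thesis unfolding g_def sv1 sv2
      by (intro contc continuous_on_divide continuous_intros) auto
  qed
  have "g 0 \<le> cos \<alpha>" using g0 unfolding g_def by simp
  moreover have "cos \<alpha> \<le> g 1" using g1 unfolding g_def by simp
  ultimately obtain t where t: "0 \<le> t" "t \<le> 1" "g t = cos \<alpha>"
    using IVT'[of g 0 "cos \<alpha>" 1, OF _ _ _ cont] by auto
  define P where "P = (x0 + t * (x1 - x0), b + t * (y1 - b), z)"
  have "P \<in> isoptic (a, b, c) (- a * exp c, - b * exp (- c), - c) \<alpha>"
  proof (rule member)
    show "P \<noteq> (a, b, c)" unfolding P_def using zc1 by auto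
    show "P \<noteq> (- a * exp c, - b * exp (- c), - c)" unfolding P_def using zc2 by auto
    show "zc (sol_T_inv P (a, b, c)) < 0" unfolding P_def sol_T_inv_def zc_def using zc1 by simp
    show "zc (sol_T_inv P (- a * exp c, - b * exp (- c), - c)) < 0"
      unfolding P_def sol_T_inv_def zc_def using zc2 by simp
    show "0 \<le> \<alpha>" "\<alpha> \<le> pi" using assms(3,4) by auto
    show "cosf (sv P (a, b, c)) (sv P (- a * exp c, - b * exp (- c), - c)) = cos \<alpha>"
      using t(3) unfolding g_def P_def by simp
  qed
  moreover have "zc P > M" unfolding P_def zc_def using zM by simp
  ultimately show "\<exists>P \<in> isoptic (a, b, c) (- a * exp c, - b * exp (- c), - c) \<alpha>. zc P > M" by blast
qed
end
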